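(* Let $A$ be a finite multiset of $n$ points in $\mathbb{R}^d$ with mean $\mu$, $\varepsilon>0$, $\gamma>0$, and let $i$ be a non-negative integer. Let $P\subset\mathbb{R}^d$ be a finite multiset of points (means) such that at least a $\left(1-\left(\frac{3}{10}\right)^{i+1}\right)$ fraction of them are $\gamma$-good. Then $\textsc{MinSumSelect}(P,i)$ returns a point that is $5^{i+1}\gamma$-good.
   Context: $\mu=\frac1n\sum_{p\in A}p$, $\mathrm{Opt}=\sum_{p\in A}\|p-\mu\|^2$. A point $x$ is $\gamma$-good if $\|x-\mu\|\le\gamma\sqrt{\frac{\varepsilon\,\mathrm{Opt}}{n}}$. $\textsc{ComputeWinner}(Q)$: for each $q_j\in Q$ let $\rho_j$ be the distance from $q_j$ to its $\lceil\frac{7}{10}|Q|\rceil$-th closest point of $Q$, and $D_j=\sum_{q\in Q,\ \|q-q_j\|\le\rho_j}\|q-q_j\|$; output a $q_j$ minimizing $D_j$. $\textsc{MinSumSelect}(P,i)$: if $i=0$ or $|P|=1$, let $W=P$; otherwise split $P$ arbitrarily into $\sqrt{|P|}$ clusters $P_1,\dots,P_{\sqrt{|P|}}$ of size $\sqrt{|P|}$ each and let $W=\{\textsc{MinSumSelect}(P_j,i-1)\}_j$; output $\textsc{ComputeWinner}(W)$. Integrality issues are ignored (all square roots arising in the recursion are treated as integers). *)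

theory Defs
  imports "HOL-Analysis.Analysis" "HOL-Library.Multiset"
begin

definition mean :: "'a::euclidean_space multiset \<Rightarrow> 'a" where
  "mean A = (1 / real (size A)) *\<^sub>R sum_mset A"

definition opt_cost :: "'a::euclidean_space multiset \<Rightarrow> real" where
  "opt_cost A = sum_mset (image_mset (\<lambda>p. (norm (p - mean A))\<^sup>2) A)"

definition gamma_good :: "'a::euclidean_space multiset \<Rightarrow> real \<Rightarrow> real \<Rightarrow> 'a \<Rightarrow> bool" where
  "gamma_good A \<epsilon> \<gamma> x \<longleftrightarrow>
     norm (x - mean A) \<le> \<gamma> * sqrt (\<epsilon> * opt_cost A / real (size A))"

text \<open>rho: distance from x to its k-th closest point of Q (counted with multiplicity,
  x itself included), where k = ceil(7/10 |Q|).\<close>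
definition cw_rho :: "'a::euclidean_space multiset \<Rightarrow> 'a \<Rightarrow> real" where
  "cw_rho Q x = sorted_list_of_multiset (image_mset (\<lambda>q. dist q x) Q)
                  ! (nat \<lceil>7/10 * real (size Q)\<rceil> - 1)"

definition cw_D :: "'a::euclidean_space multiset \<Rightarrow> 'a \<Rightarrow> real" where
  "cw_D Q x = sum_mset (image_mset (\<lambda>q. dist q x) (filter_mset (\<lambda>q. dist q x \<le> cw_rho Q x) Q))"

text \<open>x is a possible output of ComputeWinner(Q) (ties broken arbitrarily).\<close>
definition compute_winner :: "'a::euclidean_space multiset \<Rightarrow> 'a \<Rightarrow> bool" where
  "compute_winner Q x \<longleftrightarrow> x \<in># Q \<and> (\<forall>y\<in>#Q. cw_D Q x \<le> cw_D Q y)"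

text \<open>x is a possible output of MinSumSelect(P,i) (arbitrary split into sqrt|P| clusters
  of size sqrt|P|, arbitrary tie breaking). Integrality: the recursive step is only
  defined when |P| is a perfect square.\<close>
inductive min_sum_select :: "'a::euclidean_space multiset \<Rightarrow> nat \<Rightarrow> 'a \<Rightarrow> bool" where
  base: "\<lbrakk>i = 0 \<or> size P = 1; compute_winner P x\<rbrakk> \<Longrightarrow> min_sum_select P i x"
| step: "\<lbrakk>size P \<noteq> 1; size P = k * k; length Ps = k; \<forall>Pj\<in>set Ps. size Pj = k;
          sum_list Ps = P; list_all2 (\<lambda>Pj w. min_sum_select Pj i w) Ps ws;
          compute_winner (mset ws) x\<rbrakk> \<Longrightarrow> min_sum_select P (Suc i) x"

end

theory Submission
  imports Defs
begin


lemma cnt_eq: "real (size (filter_mset P Q)) = (\<Sum>q\<in>#Q. if P q then 1 else 0)"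
  by (induction Q) auto

lemma fsum_eq: "sum_mset (image_mset f (filter_mset P Q)) = (\<Sum>q\<in>#Q. if P q then f q else (0::real))"
  by (induction Q) auto

lemma sorted_kth_count:
  fixes xs :: "real list"
  assumes "sorted xs" "1 \<le> k" "k \<le> length xs"
  shows "k \<le> length (filter (\<lambda>v. v \<le> xs ! (k-1)) xs)"
proof -
  have "{0..<k} \<subseteq> {i. i < length xs \<and> xs ! i \<le> xs ! (k-1)}"
    using assms by (auto intro: sorted_nth_mono)
  then have "card {0..<k} \<le> card {i. i < length xs \<and> xs ! i \<le> xs ! (k-1)}"
    by (intro card_mono) auto
  then show ?thesis by (simp add: length_filter_conv_card)
qed

lemma sorted_kth_le:
  fixes xs :: "real list"
  assumes "sorted xs" "1 \<le> k" "k \<le> length xs" "k \<le> length (filter (\<lambda>v. v \<le> c) xs)"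
  shows "xs ! (k-1) \<le> c"
proof (rule ccontr)
  assume "\<not> ?thesis"
  then have "{i. i < length xs \<and> xs ! i \<le> c} \<subseteq> {0..<k-1}"
    using assms sorted_nth_mono[OF assms(1), of "k-1"] by (auto simp: not_less) (smt (verit) assms(1) not_less sorted_nth_mono)
  then have "card {i. i < length xs \<and> xs ! i \<le> c} \<le> k - 1"
    by (metis card_atLeastLessThan card_mono finite_atLeastLessThan minus_nat.diff_0)
  then show False using assms(4) assms(2) by (simp add: length_filter_conv_card)
qed

lemma rho_count:
  assumes "Q \<noteq> {#}"
  shows "nat \<lceil>7/10 * real (size Q)\<rceil> \<le> size (filter_mset (\<lambda>q. dist q y \<le> cw_rho Q y) Q)"
proof -
  let ?M = "image_mset (\<lambda>q. dist q y) Q"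
  let ?xs = "sorted_list_of_multiset ?M"
  let ?k = "nat \<lceil>7/10 * real (size Q)\<rceil>"
  have len: "length ?xs = size Q" by (metis mset_sorted_list_of_multiset size_image_mset size_mset)
  have k1: "1 \<le> ?k" using assms by (simp add: nonempty_has_size) linarith
  have k2: "?k \<le> size Q" by (simp add: nat_le_iff ceiling_le_iff)
  have "?k \<le> length (filter (\<lambda>v. v \<le> ?xs ! (?k-1)) ?xs)"
    using sorted_kth_count[of ?xs ?k] k1 k2 len by simp
  also have "\<dots> = size (filter_mset (\<lambda>v. v \<le> cw_rho Q y) ?M)"
    by (metis cw_rho_def mset_filter mset_sorted_list_of_multiset size_mset)
  also have "\<dots> = size (filter_mset (\<lambda>q. dist q y \<le> cw_rho Q y) Q)"
    by (simp add: filter_mset_image_mset)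
  finally show ?thesis .
qed

lemma rho_le:
  assumes "Q \<noteq> {#}" "nat \<lceil>7/10 * real (size Q)\<rceil> \<le> size (filter_mset (\<lambda>q. dist q y \<le> c) Q)"
  shows "cw_rho Q y \<le> c"
proof -
  let ?M = "image_mset (\<lambda>q. dist q y) Q"
  let ?xs = "sorted_list_of_multiset ?M"
  let ?k = "nat \<lceil>7/10 * real (size Q)\<rceil>"
  have len: "length ?xs = size Q" by (metis mset_sorted_list_of_multiset size_image_mset size_mset)
  have k1: "1 \<le> ?k" using assms by (simp add: nonempty_has_size) linarith
  have k2: "?k \<le> size Q" by (simp add: nat_le_iff ceiling_le_iff)
  have "size (filter_mset (\<lambda>q. dist q y \<le> c) Q) = size (filter_mset (\<lambda>v. v \<le> c) ?M)"
    by (simp add: filter_mset_image_mset)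
  also have "\<dots> = length (filter (\<lambda>v. v \<le> c) ?xs)"
    by (metis mset_filter mset_sorted_list_of_multiset size_mset)
  finally have "?k \<le> length (filter (\<lambda>v. v \<le> c) ?xs)" using assms(2) by simp
  then show ?thesis unfolding cw_rho_def using sorted_kth_le[of ?xs ?k c] k1 k2 len by simp
qed

lemma sum_lin2: "(\<Sum>q\<in>#Q. a * u q + b * v q) = a * (\<Sum>q\<in>#Q. u q) + b * (\<Sum>q\<in>#Q. v q :: real)"
  by (induction Q) (auto simp: algebra_simps)

lemma sum_lin3: "(\<Sum>q\<in>#Q. u q + v q - 1) = (\<Sum>q\<in>#Q. u q) + (\<Sum>q\<in>#Q. v q :: real) - real (size Q)"
  by (induction Q) (auto simp: algebra_simps)

lemma core:
  fixes Q :: "'a::euclidean_space multiset" and c x :: 'a and R :: real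
  assumes R: "R \<ge> 0"
    and G: "real (size (filter_mset (\<lambda>q. norm (q - c) \<le> R) Q)) \<ge> 7/10 * real (size Q)"
    and W: "compute_winner Q x"
  shows "norm (x - c) \<le> 5*R"
proof (rule ccontr)
  assume nt: "\<not> norm (x - c) \<le> 5*R"
  define \<delta> where "\<delta> = norm (x - c) - 5*R"
  have dpos: "\<delta> > 0" using nt by (simp add: \<delta>_def)
  have xQ: "x \<in># Q" and xmin: "\<And>y. y \<in># Q \<Longrightarrow> cw_D Q x \<le> cw_D Q y"
    using W by (auto simp: compute_winner_def)
  have Qne: "Q \<noteq> {#}" using xQ by auto
  define m where "m = real (size Q)"
  define k where "k = nat \<lceil>7/10 * real (size Q)\<rceil>"
  have mpos: "m \<ge> 1" using Qne by (simp add: m_def nonempty_has_size)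
  have kge: "real k \<ge> 7/10 * m" unfolding k_def m_def by linarith
  define Gp where "Gp = (\<lambda>q. norm (q - c) \<le> R)"
  define I where "I = (\<lambda>P. (\<Sum>q\<in>#Q. if P q then 1 else 0 :: real))"
  have Isize: "\<And>P. I P = real (size (filter_mset P Q))" by (simp add: I_def cnt_eq)
  have IG: "I Gp \<ge> 7/10 * m" using G by (simp add: Isize Gp_def m_def)
  have sizeG: "k \<le> size (filter_mset Gp Q)"
    using G unfolding k_def Gp_def by (simp add: nat_le_iff ceiling_le_iff)
  moreover have "k \<ge> 1" using kge mpos by linarith
  ultimately have "filter_mset Gp Q \<noteq> {#}" by (metis le_zero_eq not_one_le_zero size_empty)
  then obtain g where gQ: "g \<in># Q" and gG: "norm (g - c) \<le> R"
    by (auto simp: Gp_def)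
  define Fp where "Fp = (\<lambda>q. dist q g \<le> 2*R)"
  have GF: "Gp q \<Longrightarrow> Fp q" for q
  proof -
    assume "Gp q"
    have "dist q g \<le> norm (q - c) + norm (g - c)"
      by (metis dist_norm dist_triangle2)
    then show ?thesis using \<open>Gp q\<close> gG by (simp add: Gp_def Fp_def)
  qed
  have IGF: "I Gp \<le> I Fp" unfolding I_def by (rule sum_mset_mono) (auto dest: GF)
  have "k \<le> size (filter_mset Fp Q)"
    using sizeG IGF by (simp add: Isize)
  then have rhog: "cw_rho Q g \<le> 2*R"
    using rho_le[OF Qne, of g "2*R"] by (simp add: Fp_def k_def)
  have Dg: "cw_D Q g \<le> 2*R * I Fp"
  proof -
    have "cw_D Q g = (\<Sum>q\<in>#Q. if dist q g \<le> cw_rho Q g then dist q g else 0)"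
      by (simp add: cw_D_def fsum_eq)
    also have "\<dots> \<le> (\<Sum>q\<in>#Q. 2*R * (if Fp q then 1 else 0))"
      by (rule sum_mset_mono) (use rhog R in \<open>auto simp: Fp_def\<close>)
    also have "\<dots> = 2*R * I Fp" by (simp add: I_def sum_mset_distrib_left)
    finally show ?thesis .
  qed
  define Sp where "Sp = (\<lambda>q. dist q x \<le> cw_rho Q x)"
  have "k \<le> size (filter_mset Sp Q)" using rho_count[OF Qne, of x] by (simp add: Sp_def k_def)
  then have IS: "I Sp \<ge> k" by (simp add: Isize)
  define SF where "SF = (\<lambda>q. Sp q \<and> Fp q)"
  define SG where "SG = (\<lambda>q. Sp q \<and> Gp q)"
  have Dx: "cw_D Q x \<ge> (2*R + \<delta>) * I SF + 2*R * I SG"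
  proof -
    have "(2*R + \<delta>) * I SF + 2*R * I SG =
      (\<Sum>q\<in>#Q. (2*R + \<delta>) * (if SF q then 1 else 0) + 2*R * (if SG q then 1 else 0))"
      by (simp add: I_def sum_lin2)
    also have "\<dots> \<le> (\<Sum>q\<in>#Q. if Sp q then dist q x else 0)"
    proof (rule sum_mset_mono)
      fix q assume "q \<in># Q"
      have t1: "norm (x - c) \<le> dist q x + norm (q - c)"
        by (metis dist_commute dist_norm dist_triangle)
      have t2: "norm (q - c) \<le> dist q g + norm (g - c)"
        by (metis dist_norm dist_triangle)
      show "(2*R + \<delta>) * (if SF q then 1 else 0) + 2*R * (if SG q then 1 else 0)
            \<le> (if Sp q then dist q x else 0)"
        using t1 t2 gG R dpos GF[of q] unfolding SF_def SG_def Gp_def Fp_def \<delta>_def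
        by (auto simp: Gp_def Fp_def)
    qed
    also have "\<dots> = cw_D Q x" by (simp add: cw_D_def fsum_eq Sp_def)
    finally show ?thesis .
  qed
  have c1: "I SF \<ge> I Sp + I Fp - m"
  proof -
    have "I Sp + I Fp - m = (\<Sum>q\<in>#Q. (if Sp q then 1 else 0) + (if Fp q then 1 else 0) - 1)"
      by (simp add: I_def sum_lin3 m_def)
    also have "\<dots> \<le> I SF" unfolding I_def by (rule sum_mset_mono) (auto simp: SF_def)
    finally show ?thesis .
  qed
  have c2: "I SG \<ge> I Sp + I Gp - m"
  proof -
    have "I Sp + I Gp - m = (\<Sum>q\<in>#Q. (if Sp q then 1 else 0) + (if Gp q then 1 else 0) - 1)"
      by (simp add: I_def sum_lin3 m_def)
    also have "\<dots> \<le> I SG" unfolding I_def by (rule sum_mset_mono) (auto simp: SG_def)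
    finally show ?thesis .
  qed
  have c3: "I SG \<le> I SF" unfolding I_def by (rule sum_mset_mono) (auto simp: SG_def SF_def dest: GF)
  have sum: "I SF + I SG \<ge> I Fp" using c1 c2 IS kge IG by linarith
  have SFpos: "I SF > 0" using c2 c3 IS kge IG mpos by linarith
  have "cw_D Q x > 2*R * I Fp"
  proof -
    have "2*R * I Fp \<le> 2*R * (I SF + I SG)" using sum R by (simp add: mult_left_mono)
    also have "\<dots> < (2*R + \<delta>) * I SF + 2*R * I SG" using dpos SFpos by (simp add: algebra_simps)
    finally show ?thesis using Dx by linarith
  qed
  then show False using xmin[OF gQ] Dg by linarith
qed

lemma size_filter_sum_list:
  "size (filter_mset p (sum_list Ps)) = (\<Sum>j<length Ps. size (filter_mset p (Ps ! j)))"
proof (induction Ps)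
  case Nil then show ?case by simp
next
  case (Cons a Ps) then show ?case by (simp del: sum.lessThan_Suc add: sum.lessThan_Suc_shift)
qed

lemma main_ind:
  assumes "min_sum_select P i x" "r \<ge> 0"
  shows "\<forall>\<gamma>>0. real (size (filter_mset (\<lambda>q. norm (q - c) \<le> \<gamma>*r) P)) \<ge> (1 - (3/10)^(i+1)) * real (size P)
     \<longrightarrow> norm (x - c) \<le> 5^(i+1)*\<gamma>*r"
  using assms
proof (induction rule: min_sum_select.induct)
  case (base i P x)
  show ?case
  proof (intro allI impI)
    fix \<gamma> :: real assume gp: "\<gamma> > 0"
      and fr: "real (size (filter_mset (\<lambda>q. norm (q - c) \<le> \<gamma>*r) P)) \<ge> (1 - (3/10)^(i+1)) * real (size P)"
    consider "i = 0" | "size P = 1" using base by blast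
    then show "norm (x - c) \<le> 5^(i+1)*\<gamma>*r"
    proof cases
      case 1
      have "norm (x - c) \<le> 5 * (\<gamma>*r)"
        by (rule core[OF _ _ base(2)]) (use fr 1 gp base(3) in auto)
      then show ?thesis using 1 by simp
    next
      case 2
      then obtain p where P: "P = {#p#}" by (metis size_1_singleton_mset)
      have xp: "x = p" using base(2) P by (simp add: compute_winner_def)
      have "(3/10::real)^i \<le> 1" by (rule power_le_one) auto
      then have "(3/10::real)^(i+1) < 1" by simp
      then have "real (size (filter_mset (\<lambda>q. norm (q - c) \<le> \<gamma>*r) P)) > 0"
        using fr P by simp
      then have "norm (p - c) \<le> \<gamma>*r" using P by (auto split: if_splits)
      also have "\<dots> \<le> 5^(i+1)*\<gamma>*r"
      proof -
        have "(1::real) \<le> 5^(i+1)" by (rule one_le_power) simp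
        then have "1 * (\<gamma>*r) \<le> 5^(i+1) * (\<gamma>*r)"
          by (rule mult_right_mono) (use gp base(3) in simp)
        then show ?thesis by (simp add: mult.assoc)
      qed
      finally show ?thesis using xp by simp
    qed
  qed
next
  case (step P k Ps i ws x)
  show ?case
  proof (intro allI impI)
    fix \<gamma> :: real assume gp: "\<gamma> > 0"
      and fr: "real (size (filter_mset (\<lambda>q. norm (q - c) \<le> \<gamma>*r) P)) \<ge> (1 - (3/10)^(Suc i+1)) * real (size P)"
    define a :: real where "a = (3/10)^(i+1)"
    have apos: "a > 0" by (simp add: a_def)
    define good where "good = (\<lambda>q. norm (q - c) \<le> \<gamma>*r)"
    define \<gamma>' where "\<gamma>' = 5^(i+1)*\<gamma>"
    define good' where "good' = (\<lambda>q. norm (q - c) \<le> \<gamma>'*r)"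
    define g where "g = (\<lambda>j. real (size (filter_mset good (Ps ! j))))"
    have lenws: "length ws = k" using list_all2_lengthD[OF step(7)] step(3) by simp
    have kpos: "k > 0" using step(6) lenws by (cases ws) (auto simp: compute_winner_def)
    have IH: "\<And>j. j < k \<Longrightarrow> real (size (filter_mset good (Ps ! j))) \<ge> (1 - a) * real k
        \<Longrightarrow> good' (ws ! j)"
    proof -
      fix j assume j: "j < k" and h: "real (size (filter_mset good (Ps ! j))) \<ge> (1 - a) * real k"
      have "min_sum_select (Ps ! j) i (ws ! j) \<and> (0 \<le> r \<longrightarrow> (\<forall>\<gamma>>0. (1 - (3/10)^(i+1)) * real (size (Ps!j)) \<le> real (size (filter_mset (\<lambda>q. norm (q - c) \<le> \<gamma>*r) (Ps!j)))
     \<longrightarrow> norm (ws!j - c) \<le> 5^(i+1)*\<gamma>*r))"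
        using list_all2_nthD[OF step(7), of j] j step(3) by simp
      then have H: "(1 - (3/10)^(i+1)) * real (size (Ps!j)) \<le> real (size (filter_mset (\<lambda>q. norm (q - c) \<le> \<gamma>*r) (Ps!j)))
     \<Longrightarrow> norm (ws!j - c) \<le> 5^(i+1)*\<gamma>*r"
        using step(8) gp by blast
      have "size (Ps ! j) = k" using step(4) j step(3) by (metis nth_mem)
      then have "norm (ws!j - c) \<le> 5^(i+1)*\<gamma>*r" using H h unfolding good_def a_def by simp
      then show "good' (ws ! j)" unfolding good'_def \<gamma>'_def by simp
    qed
    have gle: "g j \<le> k" if "j < k" for j
    proof -
      have "size (Ps ! j) = k" using step(4) step(3) that by (metis nth_mem)
      then show ?thesis unfolding g_def by (metis of_nat_le_iff size_filter_mset_lesseq)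
    qed
    have sumg: "(\<Sum>j<k. g j) \<ge> (1 - (3/10) * a) * (real k * real k)"
    proof -
      have "(\<Sum>j<k. g j) = real (size (filter_mset good P))"
        using size_filter_sum_list[of good Ps] step(5) step(3) unfolding g_def by (metis of_nat_sum)
      then show ?thesis using fr step(2) by (simp add: good_def a_def)
    qed
    define NB where "NB = {j. j < k \<and> g j < (1 - a) * real k}"
    have NBsub: "NB \<subseteq> {..<k}" by (auto simp: NB_def)
    have "real (card NB) * (a * real k) = (\<Sum>j\<in>NB. a * real k)" by simp
    also have "\<dots> \<le> (\<Sum>j\<in>NB. real k - g j)"
      by (rule sum_mono) (auto simp: NB_def algebra_simps)
    also have "\<dots> \<le> (\<Sum>j<k. real k - g j)"
      by (rule sum_mono2) (use NBsub gle in auto)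
    also have "\<dots> = real k * real k - (\<Sum>j<k. g j)" by (simp add: sum_subtractf)
    also have "\<dots> \<le> (3/10) * a * (real k * real k)" using sumg by (simp add: algebra_simps)
    finally have "real (card NB) * (a * real k) \<le> (3/10 * real k) * (a * real k)" by (simp add: algebra_simps)
    then have cNB: "real (card NB) \<le> 3/10 * real k" using apos kpos by simp
    have "{..<k} - NB \<subseteq> {j. j < length ws \<and> good' (ws ! j)}"
      using IH lenws by (auto simp: NB_def g_def not_less)
    then have "card ({..<k} - NB) \<le> card {j. j < length ws \<and> good' (ws ! j)}"
      by (intro card_mono) auto
    moreover have "card ({..<k} - NB) = k - card NB"
      using NBsub by (simp add: card_Diff_subset finite_subset)
    moreover have "card NB \<le> k" using NBsub by (metis card_lessThan card_mono finite_lessThan)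
    moreover have "size (filter_mset good' (mset ws)) = card {j. j < length ws \<and> good' (ws ! j)}"
      by (metis length_filter_conv_card mset_filter size_mset)
    ultimately have cnt: "real (size (filter_mset good' (mset ws))) \<ge> 7/10 * real (size (mset ws))"
      using cNB lenws by (simp add: of_nat_diff)
    have "norm (x - c) \<le> 5 * (\<gamma>'*r)"
      by (rule core[OF _ _ step(6)]) (use cnt gp step(8) in \<open>auto simp: good'_def \<gamma>'_def\<close>)
    then show "norm (x - c) \<le> 5^(Suc i+1)*\<gamma>*r" by (simp add: \<gamma>'_def mult.assoc)
  qed
qed


theorem lemma4p3:
  fixes A P :: "'a::euclidean_space multiset" and \<epsilon> \<gamma> :: real and i :: nat
  assumes "A \<noteq> {#}" and "\<epsilon> > 0" and "\<gamma> > 0"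
    and "real (size (filter_mset (gamma_good A \<epsilon> \<gamma>) P)) \<ge> (1 - (3/10) ^ (i+1)) * real (size P)"
    and "min_sum_select P i x"
  shows "gamma_good A \<epsilon> (5 ^ (i+1) * \<gamma>) x"
proof -
  define r where "r = sqrt (\<epsilon> * opt_cost A / real (size A))"
  have "(\<Sum>p\<in>#A. (0::real)) \<le> (\<Sum>p\<in>#A. (norm (p - mean A))\<^sup>2)"
    by (rule sum_mset_mono) simp
  then have oc: "opt_cost A \<ge> 0" by (simp add: opt_cost_def)
  have r0: "r \<ge> 0" unfolding r_def using oc assms(2) by simp
  have eq: "\<And>g. gamma_good A \<epsilon> g = (\<lambda>q. norm (q - mean A) \<le> g*r)"
    by (rule ext) (simp add: gamma_good_def r_def)
  have "norm (x - mean A) \<le> 5^(i+1)*\<gamma>*r"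
    using main_ind[OF assms(5) r0, of "mean A"] assms(3,4) unfolding eq by auto
  then show ?thesis by (simp add: eq)
qed

end
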